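(* Let $\mathsf{T}$ be a triangulation of the standard simplex $\Delta^{n-1}=\langle v_1,\ldots,v_n\rangle$ and let $\lambda_1,\ldots,\lambda_m$ be Sperner labelings of $\mathsf{T}$. (1) For any choice of positive integers $k_1,\ldots,k_m$ with $k_1+\cdots+k_m=m+n-1$, there exists a simplex $\sigma\in\mathsf{T}$ such that, for each $i\in[m]$, the labeling $\lambda_i$ uses at least $k_i$ distinct labels on the vertices of $\sigma$. (2) For any choice of positive integers $\ell_1,\ldots,\ell_n$ with $\ell_1+\cdots+\ell_n=m+n-1$, there exists a simplex $\tau\in\mathsf{T}$ such that, for each $j\in[n]$, the label $j$ is used on the vertices of $\tau$ by at least $\ell_j$ of the labelings $\lambda_1,\ldots,\lambda_m$.
   Context: A labeling $\lambda\colon V(\mathsf{T})\to[n]$ of the vertices of a triangulation $\mathsf{T}$ of $\Delta^{n-1}=\langle v_1,\ldots,v_n\rangle$ is a Sperner labeling if each vertex $v$ of $\mathsf{T}$ receives a label $j$ such that $v_j$ is a vertex of the minimal face of $\Delta^{n-1}$ containing $v$. *)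

theory Defs
  imports "HOL-Analysis.Analysis"
begin

text \<open>The standard simplex with vertices v_j = e_j (j ranging over the finite index type 'n, |'n| = n).\<close>
definition std_vertex :: "'n::finite \<Rightarrow> real^'n" where
  "std_vertex j = axis j 1"

definition std_simplex :: "(real^'n::finite) set" where
  "std_simplex = convex hull (range std_vertex)"

definition triangulation_of_std_simplex :: "(real^'n::finite) set set \<Rightarrow> bool" where
  "triangulation_of_std_simplex T \<longleftrightarrow> simplicial_complex T \<and> \<Union>T = std_simplex"

definition simplex_vertices :: "(real^'n::finite) set \<Rightarrow> (real^'n) set" where
  "simplex_vertices \<sigma> = {x. x extreme_point_of \<sigma>}"

definition tri_vertices :: "(real^'n::finite) set set \<Rightarrow> (real^'n) set" where
  "tri_vertices T = (\<Union>\<sigma>\<in>T. simplex_vertices \<sigma>)"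

definition min_face :: "real^'n::finite \<Rightarrow> (real^'n) set" where
  "min_face v = \<Inter>{F. F face_of std_simplex \<and> v \<in> F}"

definition sperner_labeling :: "(real^'n::finite) set set \<Rightarrow> (real^'n \<Rightarrow> 'n) \<Rightarrow> bool" where
  "sperner_labeling T lab \<longleftrightarrow> (\<forall>v\<in>tri_vertices T. std_vertex (lab v) \<in> min_face v)"

end

theory Submission
  imports Defs
begin

lemma std_simplex_eq:
  "std_simplex = {x::real^'n::finite. (\<forall>j. 0 \<le> x$j) \<and> sum (\<lambda>j. x$j) UNIV = 1}"
proof
  have cv: "convex {x::real^'n::finite. (\<forall>j. 0 \<le> x$j) \<and> sum (\<lambda>j. x$j) UNIV = 1}"
    unfolding convex_def by (auto simp: sum.distrib sum_distrib_left[symmetric])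
  show "std_simplex \<subseteq> {x::real^'n::finite. (\<forall>j. 0 \<le> x$j) \<and> sum (\<lambda>j. x$j) UNIV = 1}"
    unfolding std_simplex_def
    apply (rule hull_minimal)
    using cv by (auto simp: std_vertex_def axis_def if_distrib cong: if_cong)
next
  show "{x::real^'n::finite. (\<forall>j. 0 \<le> x$j) \<and> sum (\<lambda>j. x$j) UNIV = 1} \<subseteq> std_simplex"
  proof
    fix x :: "real^'n" assume x: "x \<in> {x. (\<forall>j. 0 \<le> x$j) \<and> sum (\<lambda>j. x$j) UNIV = 1}"
    have "(\<Sum>j\<in>UNIV. x$j *\<^sub>R std_vertex j) \<in> std_simplex"
      unfolding std_simplex_def
      by (rule convex_sum) (use x in \<open>auto intro: hull_inc\<close>)
    moreover have "(\<Sum>j\<in>UNIV. x$j *\<^sub>R std_vertex j) = x"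
      using basis_expansion[of x] by (simp add: std_vertex_def scalar_mult_eq_scaleR)
    ultimately show "x \<in> std_simplex" by simp
  qed
qed

lemma std_simplex_props: "compact (std_simplex::(real^'n::finite) set)" "convex (std_simplex::(real^'n::finite) set)"
  "std_simplex \<noteq> ({}::(real^'n::finite) set)"
  unfolding std_simplex_def
  by (auto simp: finite_imp_compact_convex_hull intro!: hull_inc)

lemma surj_face:
  fixes F :: "real^'n::finite \<Rightarrow> real^'n"
  assumes contF: "continuous_on std_simplex F" and Fim: "F \<in> std_simplex \<rightarrow> std_simplex"
    and face: "\<And>x j. x \<in> std_simplex \<Longrightarrow> x$j = 0 \<Longrightarrow> F x $ j = 0"
    and b: "b \<in> std_simplex" "\<And>j. 0 < b$j"
  shows "\<exists>x\<in>std_simplex. F x = b"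
proof -
  define p where "p x j = max 0 (b$j - F x $ j)" for x j
  define s where "s x = (\<Sum>k\<in>UNIV. p x k)" for x
  define G where "G x = (\<chi> j. (x$j + p x j) / (1 + s x))" for x
  have p0: "0 \<le> p x j" for x j by (simp add: p_def)
  have s0: "0 \<le> s x" for x unfolding s_def by (simp add: sum_nonneg p0)
  have "continuous_on std_simplex G"
    unfolding G_def s_def p_def
    apply (intro continuous_intros contF)
    using s0[unfolded s_def p_def] by (smt (verit))
  moreover have "G \<in> std_simplex \<rightarrow> std_simplex"
  proof
    fix x :: "real^'n" assume "x \<in> std_simplex"
    then have x: "\<forall>j. 0 \<le> x$j" "sum (\<lambda>j. x$j) UNIV = 1" by (auto simp: std_simplex_eq)
    have "(\<Sum>j\<in>UNIV. (x$j + p x j) / (1 + s x)) = (\<Sum>j\<in>UNIV. (x$j + p x j)) / (1 + s x)"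
      by (simp add: sum_divide_distrib)
    also have "\<dots> = 1" using x s0[of x] by (simp add: sum.distrib s_def)
    finally show "G x \<in> std_simplex"
      unfolding std_simplex_eq G_def using x s0[of x] p0 by (auto intro!: divide_nonneg_pos add_nonneg_nonneg)
  qed
  ultimately obtain x where xS: "x \<in> std_simplex" and fx: "G x = x"
    using brouwer[OF std_simplex_props] by blast
  have x: "\<forall>j. 0 \<le> x$j" "sum (\<lambda>j. x$j) UNIV = 1" using xS by (auto simp: std_simplex_eq)
  have Fx: "\<forall>j. 0 \<le> F x$j" "sum (\<lambda>j. F x$j) UNIV = 1" using xS Fim by (auto simp: std_simplex_eq)
  have bb: "sum (\<lambda>j. b$j) UNIV = 1" using b by (auto simp: std_simplex_eq)
  have eq: "x$j * s x = p x j" for j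
  proof -
    have "(x$j + p x j) / (1 + s x) = x$j" using fx by (metis vec_lambda_beta G_def)
    then show ?thesis using s0[of x] by (simp add: field_simps)
  qed
  show ?thesis
  proof (cases "s x = 0")
    case True
    then have "\<forall>j. p x j = 0" using eq by simp
    then have le: "\<forall>j. b$j \<le> F x$j"
    proof (intro allI)
      fix j assume "\<forall>j. p x j = 0"
      then have "max 0 (b$j - F x$j) = 0" by (simp add: p_def)
      then show "b$j \<le> F x$j" by (simp add: max_def split: if_splits)
    qed
    have "(\<Sum>j\<in>UNIV. F x$j - b$j) = 0" using Fx bb by (simp add: sum_subtractf)
    then have "\<forall>j. F x $ j - b$j = 0"
      using sum_nonneg_eq_0_iff[of UNIV "\<lambda>j. F x$j - b$j"] le by auto
    then show ?thesis using xS by (auto simp: vec_eq_iff)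
  next
    case False
    then have sp: "s x > 0" using s0[of x] by simp
    have "x$j > 0" for j
    proof (rule ccontr)
      assume "\<not> x$j > 0"
      then have "x$j = 0" using x(1)[rule_format, of j] by linarith
      then have "F x$j = 0" using face xS by blast
      then have "p x j > 0" using b by (simp add: p_def)
      then show False using eq[of j] \<open>x$j = 0\<close> by simp
    qed
    then have "\<And>j. p x j > 0" using eq sp by (metis mult_pos_pos)
    then have "F x$j < b$j" for j
    proof -
      have "0 < max 0 (b$j - F x$j)" using \<open>\<And>j. p x j > 0\<close>[of j] by (simp add: p_def)
      then show ?thesis by (simp add: max_def split: if_splits)
    qed
    then have "(\<Sum>j\<in>UNIV. F x$j) < (\<Sum>j\<in>UNIV. b$j)"
      by (intro sum_strict_mono) auto
    then show ?thesis using Fx bb by simp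
  qed
qed

lemma main_cont:
  fixes w :: "nat \<Rightarrow> 'n::finite \<Rightarrow> real^'n \<Rightarrow> real" and c :: "nat \<Rightarrow> real" and b :: "real^'n"
  assumes cont: "\<And>i j. i<m \<Longrightarrow> continuous_on std_simplex (w i j)"
  and nonneg: "\<And>i j x. i<m \<Longrightarrow> x\<in>std_simplex \<Longrightarrow> 0 \<le> w i j x"
  and face: "\<And>i j x. i<m \<Longrightarrow> x\<in>std_simplex \<Longrightarrow> x$j = 0 \<Longrightarrow> w i j x = 0"
  and cover: "\<And>i x. i<m \<Longrightarrow> x\<in>std_simplex \<Longrightarrow> \<exists>j. 0 < w i j x"
  and c: "\<And>i. i<m \<Longrightarrow> 0 < c i" "(\<Sum>i<m. c i) = 1"
  and b: "b \<in> std_simplex" "\<And>j. 0 < b$j"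
  shows "\<exists>x\<in>std_simplex. (\<forall>i<m. c i \<le> (\<Sum>j\<in>UNIV. if 0 < w i j x then b$j else 0))
           \<and> (\<forall>j. b$j \<le> (\<Sum>i<m. if 0 < w i j x then c i else 0))"
proof -
  have cnn: "\<And>i. i<m \<Longrightarrow> 0 \<le> c i" using c by (simp add: less_imp_le)
  define D where "D i x = (\<Sum>k\<in>UNIV. w i k x)" for i x
  have Dpos: "0 < D i x" if ix: "i<m" "x\<in>std_simplex" for i x
  proof -
    obtain j where "0 < w i j x" using cover[OF ix] by blast
    moreover have "w i j x \<le> D i x" unfolding D_def
      by (rule member_le_sum) (use nonneg ix in auto)
    ultimately show ?thesis by simp
  qed
  define f where "f i j x = w i j x / D i x" for i j x
  have f0: "0 \<le> f i j x" if "i<m" "x\<in>std_simplex" for i j x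
    unfolding f_def using nonneg[OF that] Dpos[OF that] by simp
  have f1: "f i j x \<le> 1" if "i<m" "x\<in>std_simplex" for i j x
  proof -
    have "w i j x \<le> D i x" unfolding D_def
      by (rule member_le_sum) (use nonneg that in auto)
    then show ?thesis unfolding f_def using Dpos[OF that] by simp
  qed
  have fs: "(\<Sum>j\<in>UNIV. f i j x) = 1" if "i<m" "x\<in>std_simplex" for i x
    unfolding f_def using Dpos[OF that] by (simp add: sum_divide_distrib[symmetric] D_def)
  define F where "F x = (\<chi> j. \<Sum>i<m. c i * f i j x)" for x
  have "\<exists>x\<in>std_simplex. F x = b"
  proof (rule surj_face[OF _ _ _ b])
    show "continuous_on std_simplex F" unfolding F_def f_def
      apply (intro continuous_intros cont)
      using Dpos unfolding D_def by (auto simp: less_le intro!: continuous_on_sum cont)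
    show "F \<in> std_simplex \<rightarrow> std_simplex"
    proof
      fix x :: "real^'n" assume x: "x \<in> std_simplex"
      have "(\<Sum>j\<in>UNIV. \<Sum>i<m. c i * f i j x) = (\<Sum>i<m. c i * (\<Sum>j\<in>UNIV. f i j x))"
        by (subst sum.swap) (simp add: sum_distrib_left)
      also have "\<dots> = 1" using fs x c by simp
      moreover have "0 \<le> (\<Sum>i<m. c i * f i j x)" for j
        using f0 x c by (intro sum_nonneg) (simp add: less_imp_le)
      ultimately show "F x \<in> std_simplex" unfolding std_simplex_eq F_def
        by simp
    qed
    show "F x $ j = 0" if "x \<in> std_simplex" "x$j = 0" for x j
      unfolding F_def f_def using face that by simp
  qed
  then obtain x where x: "x \<in> std_simplex" "F x = b" by blast
  have bj: "b$j = (\<Sum>i<m. c i * f i j x)" for j using x by (auto simp: F_def)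
  show ?thesis
  proof (intro bexI[OF _ x(1)] conjI allI impI)
    fix i assume i: "i<m"
    have "c i = (\<Sum>j\<in>UNIV. c i * f i j x)" using fs[OF i x(1)] by (simp add: sum_distrib_left[symmetric])
    also have "\<dots> \<le> (\<Sum>j\<in>UNIV. if 0 < w i j x then b$j else 0)"
    proof (rule sum_mono)
      fix j
      show "c i * f i j x \<le> (if 0 < w i j x then b$j else 0)"
      proof (cases "0 < w i j x")
        case True
        have "c i * f i j x \<le> (\<Sum>i<m. c i * f i j x)"
          by (rule member_le_sum[where f="\<lambda>i. c i * f i j x"]) (use i f0 x cnn in \<open>auto intro!: mult_nonneg_nonneg\<close>)
        then show ?thesis using True bj[of j] by simp
      next
        case False
        then have "w i j x = 0" using nonneg[OF i x(1), of j] by simp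
        then show ?thesis using False by (simp add: f_def)
      qed
    qed
    finally show "c i \<le> (\<Sum>j\<in>UNIV. if 0 < w i j x then b$j else 0)" .
  next
    fix j
    have "b$j = (\<Sum>i<m. c i * f i j x)" by (rule bj)
    also have "\<dots> \<le> (\<Sum>i<m. if 0 < w i j x then c i else 0)"
    proof (rule sum_mono)
      fix i assume "i \<in> {..<m}"
      then have i: "i < m" by simp
      show "c i * f i j x \<le> (if 0 < w i j x then c i else 0)"
      proof (cases "0 < w i j x")
        case True
        then show ?thesis using f1[OF i x(1), of j] c(1)[OF i]
          by (simp add: mult_left_le)
      next
        case False
        then have "w i j x = 0" using nonneg[OF i x(1), of j] by simp
        then show ?thesis using False by (simp add: f_def)
      qed
    qed
    finally show "b$j \<le> (\<Sum>i<m. if 0 < w i j x then c i else 0)" .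
  qed
qed

definition FF :: "real^'n::finite \<Rightarrow> (real^'n) set" where
  "FF x = {y\<in>std_simplex. \<forall>j. x$j = 0 \<longrightarrow> y$j = 0}"

lemma FF_face: "FF (x::real^'n::finite) face_of std_simplex"
proof -
  define a :: "real^'n" where "a = (\<chi> j. if x$j = 0 then -1 else 0)"
  have ineq: "a \<bullet> y = - (\<Sum>j\<in>{j. x$j = 0}. y$j)" for y
  proof -
    have "a \<bullet> y = (\<Sum>i\<in>UNIV. if x$i = 0 then - y$i else 0)"
      unfolding inner_vec_def by (rule sum.cong) (auto simp: a_def)
    also have "\<dots> = - (\<Sum>j\<in>{j. x$j = 0}. y$j)"
      by (simp add: sum.If_cases sum_negf)
    finally show ?thesis .
  qed
  have "FF x = std_simplex \<inter> {y. a \<bullet> y = 0}"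
  proof (intro set_eqI iffI)
    fix y assume "y \<in> FF x" then show "y \<in> std_simplex \<inter> {y. a \<bullet> y = 0}"
      unfolding FF_def ineq by auto
  next
    fix y assume y: "y \<in> std_simplex \<inter> {y. a \<bullet> y = 0}"
    then have nn: "\<forall>j. 0 \<le> y$j" by (auto simp: std_simplex_eq)
    have "(\<Sum>j\<in>{j. x$j = 0}. y$j) = 0" using y ineq by auto
    then have "\<forall>j\<in>{j. x$j = 0}. y$j = 0" using sum_nonneg_eq_0_iff[of "{j. x$j = 0}" "\<lambda>j. y$j"] nn by auto
    then show "y \<in> FF x" using y unfolding FF_def by auto
  qed
  moreover have "std_simplex \<inter> {y. a \<bullet> y = 0} face_of std_simplex"
  proof (rule face_of_Int_supporting_hyperplane_le)
    show "convex std_simplex" by (rule std_simplex_props)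
    fix y :: "real^'n" assume "y \<in> std_simplex"
    then have nn: "\<forall>j. 0 \<le> y$j" by (auto simp: std_simplex_eq)
    show "a \<bullet> y \<le> 0" unfolding ineq using nn by (simp add: sum_nonneg)
  qed
  ultimately show ?thesis by simp
qed

lemma FF_self: "x \<in> std_simplex \<Longrightarrow> x \<in> FF x"
  by (simp add: FF_def)

lemma simplex_facts:
  assumes "simplicial_complex T" "\<sigma> \<in> T"
  shows "finite (simplex_vertices \<sigma>)" "compact \<sigma>" "convex \<sigma>"
proof -
  obtain n where "n simplex \<sigma>" using assms unfolding simplicial_complex_def by blast
  then obtain C where C: "finite C" "\<sigma> = convex hull C" unfolding simplex by blast
  have "simplex_vertices \<sigma> \<subseteq> C" unfolding simplex_vertices_def C(2)
    using extreme_point_of_convex_hull by blast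
  then show "finite (simplex_vertices \<sigma>)" using C(1) finite_subset by blast
  show "compact \<sigma>" "convex \<sigma>" using C by (auto simp: finite_imp_compact_convex_hull)
qed

lemma finite_tri_vertices: "simplicial_complex T \<Longrightarrow> finite (tri_vertices T)"
  unfolding tri_vertices_def using simplex_facts(1)
  by (metis finite_UN simplicial_complex_def)

lemma closed_avoid: "simplicial_complex (T::(real^'n::finite) set set) \<Longrightarrow> closed (\<Union>{\<sigma>\<in>T. v \<notin> \<sigma>})"
proof (rule closed_Union)
  assume T: "simplicial_complex T"
  then show "finite {\<sigma> \<in> T. v \<notin> \<sigma>}" unfolding simplicial_complex_def by auto
  show "\<forall>S\<in>{\<sigma> \<in> T. v \<notin> \<sigma>}. closed S" using simplex_facts(2)[OF T] compact_imp_closed by blast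
qed

lemma vertex_in_carrier:
  assumes T: "simplicial_complex T" and s0: "\<sigma>0 \<in> T" "x \<in> \<sigma>0"
    and v: "v \<in> tri_vertices T" and all: "\<forall>\<tau>\<in>T. x\<in>\<tau> \<longrightarrow> v\<in>\<tau>"
  shows "v \<in> simplex_vertices \<sigma>0"
proof -
  obtain \<tau> where tau: "\<tau> \<in> T" "v extreme_point_of \<tau>"
    using v unfolding tri_vertices_def simplex_vertices_def by blast
  have v0: "v \<in> \<sigma>0" using all s0 by blast
  have f1: "(\<tau> \<inter> \<sigma>0) face_of \<tau>" "(\<sigma>0 \<inter> \<tau>) face_of \<sigma>0"
    using T tau(1) s0(1) unfolding simplicial_complex_def by blast+
  have "v extreme_point_of (\<tau> \<inter> \<sigma>0)"
    using extreme_point_of_face[OF f1(1)] tau(2) v0 extreme_point_of_def by blast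
  then have "v extreme_point_of (\<sigma>0 \<inter> \<tau>)" by (simp add: Int_commute)
  then have "v extreme_point_of \<sigma>0" using extreme_point_of_face[OF f1(2)] by blast
  then show ?thesis by (simp add: simplex_vertices_def)
qed

lemma cover_vertex:
  assumes tri: "triangulation_of_std_simplex T" and sp: "sperner_labeling T lab"
    and x: "x \<in> std_simplex"
  shows "\<exists>v\<in>tri_vertices T. (\<forall>\<tau>\<in>T. x\<in>\<tau> \<longrightarrow> v\<in>\<tau>) \<and> 0 < x$(lab v)"
proof -
  have T: "simplicial_complex T" and U: "\<Union>T = std_simplex"
    using tri unfolding triangulation_of_std_simplex_def by auto
  have faceT: "F \<in> T" if "F face_of S" "S \<in> T" for F S
    using T that unfolding simplicial_complex_def by blast
  let ?M = "{\<sigma>\<in>T. x\<in>\<sigma>}"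
  have "finite ?M" using T unfolding simplicial_complex_def by auto
  moreover have "?M \<noteq> {}" using x U by auto
  ultimately obtain \<sigma> where s: "\<sigma> \<in> T" "x \<in> \<sigma>" and mini: "\<forall>\<tau>\<in>?M. \<tau> \<subseteq> \<sigma> \<longrightarrow> \<sigma> = \<tau>"
    using finite_has_minimal[of ?M] by blast
  have sub: "\<sigma> \<subseteq> \<tau>" if "\<tau> \<in> T" "x \<in> \<tau>" for \<tau>
  proof -
    have "(\<sigma> \<inter> \<tau>) face_of \<sigma>" using T s(1) that(1) unfolding simplicial_complex_def by blast
    then have "\<sigma> \<inter> \<tau> \<in> T" using faceT s(1) by blast
    then have "\<sigma> = \<sigma> \<inter> \<tau>" using mini s(2) that(2) by blast
    then show ?thesis by blast
  qed
  have sS: "\<sigma> \<subseteq> std_simplex" using s(1) U by blast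
  have cs: "convex \<sigma>" "compact \<sigma>" using simplex_facts[OF T s(1)] by auto
  have "(FF x \<inter> \<sigma>) face_of (std_simplex \<inter> \<sigma>)" by (rule face_of_slice[OF FF_face cs(1)])
  then have "(FF x \<inter> \<sigma>) face_of \<sigma>" using sS by (simp add: Int_absorb1)
  then have "FF x \<inter> \<sigma> \<in> T" using faceT s(1) by blast
  moreover have "x \<in> FF x \<inter> \<sigma>" using FF_self[OF x] s(2) by blast
  ultimately have "\<sigma> = FF x \<inter> \<sigma>" using mini by blast
  then have sFF: "\<sigma> \<subseteq> FF x" by blast
  obtain v where v: "v extreme_point_of \<sigma>"
    using extreme_point_exists_convex[OF cs(2) cs(1)] s(2) by blast
  then have vs: "v \<in> \<sigma>" by (simp add: extreme_point_of_def)
  have vV: "v \<in> tri_vertices T" using v s(1) unfolding tri_vertices_def simplex_vertices_def by blast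
  have "std_vertex (lab v) \<in> min_face v" using sp vV unfolding sperner_labeling_def by blast
  moreover have "min_face v \<subseteq> FF v" unfolding min_face_def
    using FF_face FF_self[of v] vs sS by blast
  ultimately have "std_vertex (lab v) \<in> FF v" by blast
  then have v1: "v$(lab v) \<noteq> 0" unfolding FF_def std_vertex_def by auto
  have "v \<in> FF x" using sFF vs by blast
  then have "x$(lab v) \<noteq> 0" using v1 unfolding FF_def by auto
  moreover have "0 \<le> x$(lab v)" using x by (simp add: std_simplex_eq)
  ultimately have "0 < x$(lab v)" by simp
  moreover have "\<forall>\<tau>\<in>T. x\<in>\<tau> \<longrightarrow> v\<in>\<tau>" using sub vs by blast
  ultimately show ?thesis using vV by blast
qed

theorem theorem2p1:
  fixes T :: "(real^'n::finite) set set"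
    and lam :: "nat \<Rightarrow> real^'n \<Rightarrow> 'n"
    and m :: nat
  assumes "triangulation_of_std_simplex T"
    and "\<And>i. i < m \<Longrightarrow> sperner_labeling T (lam i)"
  shows "(\<forall>k::nat \<Rightarrow> nat. (\<forall>i<m. 0 < k i) \<and> (\<Sum>i<m. k i) = m + CARD('n) - 1 \<longrightarrow>
            (\<exists>\<sigma>\<in>T. \<forall>i<m. k i \<le> card (lam i ` simplex_vertices \<sigma>)))
       \<and> (\<forall>l::'n \<Rightarrow> nat. (\<forall>j. 0 < l j) \<and> (\<Sum>j\<in>UNIV. l j) = m + CARD('n) - 1 \<longrightarrow>
            (\<exists>\<tau>\<in>T. \<forall>j. l j \<le> card {i. i < m \<and> j \<in> lam i ` simplex_vertices \<tau>}))"
proof -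
  note tri = assms(1) and sp = assms(2)
  have T: "simplicial_complex T" and U: "\<Union>T = std_simplex"
    using tri unfolding triangulation_of_std_simplex_def by auto
  define n where "n = CARD('n)"
  have n1: "1 \<le> n" unfolding n_def by (simp add: Suc_le_eq)
  define V where "V = tri_vertices T"
  have finV: "finite V" unfolding V_def by (rule finite_tri_vertices[OF T])
  define A where "A v = \<Union>{\<sigma>\<in>T. v \<notin> \<sigma>}" for v
  define \<rho> where "\<rho> v x = (if A v = {} then 1 else infdist x (A v))" for v and x :: "real^'n"
  have \<rho>0: "0 \<le> \<rho> v x" for v x by (simp add: \<rho>_def infdist_nonneg)
  have \<rho>iff: "0 < \<rho> v x \<longleftrightarrow> (\<forall>\<tau>\<in>T. x\<in>\<tau> \<longrightarrow> v\<in>\<tau>)" for v x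
  proof (cases "A v = {}")
    case True
    then show ?thesis by (auto simp: \<rho>_def A_def)
  next
    case False
    have "closed (A v)" unfolding A_def by (rule closed_avoid[OF T])
    then have "x \<in> A v \<longleftrightarrow> \<rho> v x = 0" using in_closed_iff_infdist_zero False by (simp add: \<rho>_def)
    then show ?thesis using \<rho>0[of v x] by (auto simp: A_def)
  qed
  have \<rho>cont: "continuous_on S (\<rho> v)" for S v
    by (cases "A v = {}") (simp_all add: \<rho>_def continuous_on_infdist continuous_on_id)
  define w where "w i j x = x$j * (\<Sum>v\<in>{v\<in>V. lam i v = j}. \<rho> v x)" for i j and x :: "real^'n"
  have cont: "continuous_on std_simplex (w i j)" for i j
    unfolding w_def by (intro continuous_intros continuous_on_sum \<rho>cont)
  have nonneg: "0 \<le> w i j x" if "x \<in> std_simplex" for i j x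
    using that unfolding w_def by (auto simp: std_simplex_eq intro!: mult_nonneg_nonneg sum_nonneg \<rho>0)
  have face: "w i j x = 0" if "x$j = 0" for i j x using that by (simp add: w_def)
  have cover: "\<exists>j. 0 < w i j x" if ix: "i < m" "x \<in> std_simplex" for i x
  proof -
    obtain v where v: "v \<in> V" "\<forall>\<tau>\<in>T. x\<in>\<tau> \<longrightarrow> v\<in>\<tau>" "0 < x$(lam i v)"
      using cover_vertex[OF tri sp[OF ix(1)] ix(2)] unfolding V_def by blast
    have "\<rho> v x \<le> (\<Sum>v\<in>{v'\<in>V. lam i v' = lam i v}. \<rho> v x)"
      by (rule member_le_sum) (use v finV \<rho>0 in auto)
    moreover have "0 < \<rho> v x" using \<rho>iff v(2) by blast
    ultimately have "0 < w i (lam i v) x" unfolding w_def using v(3) by simp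
    then show ?thesis by blast
  qed
  have carrier: "j \<in> lam i ` simplex_vertices \<sigma>0"
    if hh: "\<sigma>0 \<in> T" "x \<in> \<sigma>0" "x \<in> std_simplex" "0 < w i j x" for i j x \<sigma>0
  proof -
    have xj0: "0 \<le> x$j" using hh(3) by (simp add: std_simplex_eq)
    have pos: "0 < (\<Sum>v\<in>{v\<in>V. lam i v = j}. \<rho> v x)"
      using hh(4) xj0 unfolding w_def by (auto simp: zero_less_mult_iff)
    have "\<exists>v\<in>{v\<in>V. lam i v = j}. 0 < \<rho> v x"
    proof (rule ccontr)
      assume "\<not> ?thesis"
      then have "\<forall>v\<in>{v\<in>V. lam i v = j}. \<rho> v x \<le> 0" by (auto simp: not_less)
      then have "(\<Sum>v\<in>{v\<in>V. lam i v = j}. \<rho> v x) \<le> 0" by (intro sum_nonpos) auto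
      with pos show False by simp
    qed
    then obtain v where v: "v \<in> V" "lam i v = j" "0 < \<rho> v x" by blast
    have "v \<in> simplex_vertices \<sigma>0"
      using vertex_in_carrier[OF T hh(1,2)] v \<rho>iff unfolding V_def by blast
    then show ?thesis using v(2) by blast
  qed
  have finSV: "finite (simplex_vertices \<sigma>)" if "\<sigma> \<in> T" for \<sigma> using simplex_facts(1)[OF T that] .
  have car: "\<exists>\<sigma>0\<in>T. x \<in> \<sigma>0" if "x \<in> std_simplex" for x using U that by blast
  show ?thesis
  proof (intro conjI allI impI)
    fix k :: "nat \<Rightarrow> nat" assume k: "(\<forall>i<m. 0 < k i) \<and> (\<Sum>i<m. k i) = m + CARD('n) - 1"
    show "\<exists>\<sigma>\<in>T. \<forall>i<m. k i \<le> card (lam i ` simplex_vertices \<sigma>)"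
    proof (cases "m = 0")
      case True
      then show ?thesis using car std_simplex_props(3) by blast
    next
      case False
      define c where "c i = (real (k i) - 1 + 1 / real m) / real n" for i
      define b :: "real^'n" where "b = (\<chi> j. 1 / real n)"
      have "(\<Sum>i<m. k i) + 1 = m + n" using k n1 unfolding n_def by simp
      then have "real (\<Sum>i<m. k i) + 1 = real m + real n" by (metis of_nat_1 of_nat_add)
      then have ks: "(\<Sum>i<m. real (k i)) = real m + real n - 1" by simp
      have "(\<Sum>i<m. c i) = ((\<Sum>i<m. real (k i)) - real m + real m * (1 / real m)) / real n"
        unfolding c_def by (simp add: sum_divide_distrib[symmetric] sum.distrib sum_subtractf)
      also have "\<dots> = 1" using ks False n1 by simp
      finally have csum: "(\<Sum>i<m. c i) = 1" .
      have cpos: "0 < c i" if "i < m" for i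
      proof -
        have "1 \<le> real (k i)" using k that by (simp add: Suc_le_eq)
        moreover have "0 < 1 / real m" using False by simp
        ultimately have "0 < real (k i) - 1 + 1 / real m" by linarith
        then show ?thesis unfolding c_def using n1 by (intro divide_pos_pos) auto
      qed
      have bS: "b \<in> std_simplex" unfolding std_simplex_eq b_def using n1 by (simp add: n_def)
      have bpos: "0 < b$j" for j using n1 by (simp add: b_def)
      obtain x where x: "x \<in> std_simplex"
        and xi: "\<forall>i<m. c i \<le> (\<Sum>j\<in>UNIV. if 0 < w i j x then b$j else 0)"
        using main_cont[of m w c b, OF cont nonneg face cover cpos csum bS bpos] by blast
      obtain \<sigma>0 where s0: "\<sigma>0 \<in> T" "x \<in> \<sigma>0" using car[OF x] by blast
      show ?thesis
      proof (intro bexI[OF _ s0(1)] allI impI)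
        fix i assume i: "i < m"
        let ?J = "{j. 0 < w i j x}"
        have seq: "(\<Sum>j\<in>UNIV. if 0 < w i j x then b$j else 0) = real (card ?J) / real n"
          by (simp add: b_def sum.If_cases)
        have "c i \<le> real (card ?J) / real n" using xi[rule_format, OF i] seq by linarith
        then have "real (k i) - 1 + 1 / real m \<le> real (card ?J)"
          using n1 unfolding c_def by (simp add: divide_le_cancel)
        moreover have "0 < 1 / real m" using False by simp
        ultimately have "k i \<le> card ?J" by linarith
        also have "card ?J \<le> card (lam i ` simplex_vertices \<sigma>0)"
          by (rule card_mono) (use finSV[OF s0(1)] carrier[OF s0 x] in auto)
        finally show "k i \<le> card (lam i ` simplex_vertices \<sigma>0)" .
      qed
    qed
  next
    fix l :: "'n \<Rightarrow> nat" assume l: "(\<forall>j. 0 < l j) \<and> (\<Sum>j\<in>UNIV. l j) = m + CARD('n) - 1"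
    have "n \<le> (\<Sum>j\<in>UNIV. l j)" unfolding n_def
      using sum_mono[of UNIV "\<lambda>_. 1::nat" l] l by (simp add: Suc_le_eq)
    then have h: "n \<le> m + n - 1" using l unfolding n_def by simp
    then have mpos: "m \<noteq> 0" using n1 by arith
    define c where "c i = 1 / real m" for i :: nat
    define b :: "real^'n" where "b = (\<chi> j. (real (l j) - 1 + 1 / real n) / real m)"
    have "(\<Sum>j\<in>UNIV. l j) + 1 = m + n" using l n1 unfolding n_def by simp
    then have "real (\<Sum>j\<in>UNIV. l j) + 1 = real m + real n" by (metis of_nat_1 of_nat_add)
    then have ls: "(\<Sum>j\<in>UNIV. real (l j)) = real m + real n - 1" by simp
    have csum: "(\<Sum>i<m. c i) = 1" using mpos by (simp add: c_def)
    have cpos: "0 < c i" for i using mpos by (simp add: c_def)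
    have bpos: "0 < b$j" for j
    proof -
      have "1 \<le> real (l j)" using l by (simp add: Suc_le_eq)
      moreover have "0 < 1 / real n" using n1 by simp
      ultimately have "0 < real (l j) - 1 + 1 / real n" by linarith
      then show ?thesis unfolding b_def using mpos by (simp add: divide_pos_pos)
    qed
    have "(\<Sum>j\<in>UNIV. b$j) = ((\<Sum>j\<in>UNIV. real (l j)) - real n + real n * (1 / real n)) / real m"
      unfolding b_def by (simp add: sum_divide_distrib[symmetric] sum.distrib sum_subtractf n_def)
    also have "\<dots> = 1" using ls mpos n1 by simp
    finally have "(\<Sum>j\<in>UNIV. b$j) = 1" .
    then have bS: "b \<in> std_simplex" unfolding std_simplex_eq using bpos less_imp_le by auto
    obtain x where x: "x \<in> std_simplex"
      and xj: "\<forall>j. b$j \<le> (\<Sum>i<m. if 0 < w i j x then c i else 0)"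
      using main_cont[of m w c b, OF cont nonneg face cover cpos csum bS bpos] by blast
    obtain \<sigma>0 where s0: "\<sigma>0 \<in> T" "x \<in> \<sigma>0" using car[OF x] by blast
    show "\<exists>\<tau>\<in>T. \<forall>j. l j \<le> card {i. i < m \<and> j \<in> lam i ` simplex_vertices \<tau>}"
    proof (intro bexI[OF _ s0(1)] allI)
      fix j
      let ?I = "{i. i < m \<and> 0 < w i j x}"
      have "(\<Sum>i<m. if 0 < w i j x then c i else 0) = real (card ({..<m} \<inter> {i. 0 < w i j x})) / real m"
        by (simp add: c_def sum.If_cases)
      also have "{..<m} \<inter> {i. 0 < w i j x} = ?I" by auto
      finally have "b$j \<le> real (card ?I) / real m" using xj by metis
      then have "real (l j) - 1 + 1 / real n \<le> real (card ?I)"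
        using mpos unfolding b_def by (simp add: divide_le_cancel)
      moreover have "0 < 1 / real n" using n1 by simp
      ultimately have "l j \<le> card ?I" by linarith
      also have "card ?I \<le> card {i. i < m \<and> j \<in> lam i ` simplex_vertices \<sigma>0}"
        by (rule card_mono) (use carrier[OF s0 x] in auto)
      finally show "l j \<le> card {i. i < m \<and> j \<in> lam i ` simplex_vertices \<sigma>0}" .
    qed
  qed
qed

end
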